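(* A set $\mathcal{K}\subseteq\wp(\mathcal{G})$ is coherent if and only if there is a proper filter $\mathfrak{D}$ on the set $\mathbf{C}$ of all coherent sets of desirable gambles — i.e. $\mathfrak{D}\subseteq\wp(\mathbf{C})$ with $\mathfrak{D}\neq\emptyset$, $\emptyset\notin\mathfrak{D}$, $\mathbb{D}_1\cap\mathbb{D}_2\in\mathfrak{D}$ whenever $\mathbb{D}_1,\mathbb{D}_2\in\mathfrak{D}$, and $\mathbb{D}_2\in\mathfrak{D}$ whenever $\mathbb{D}_1\in\mathfrak{D}$ and $\mathbb{D}_1\subseteq\mathbb{D}_2\subseteq\mathbf{C}$ — such that for all $B\subseteq\mathcal{G}$: $B\in\mathcal{K}$ iff there is $\mathbb{D}\in\mathfrak{D}$ with $B\cap D\neq\emptyset$ for all $D\in\mathbb{D}$. Moreover, for such a filter, the latter condition is equivalent to $\{D\in\mathbf{C}: B\cap D\neq\emptyset\}\in\mathfrak{D}$.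
   Context: $\Omega$ is a non-empty set and $\mathcal{G}$ is the set of bounded functions $\Omega\to\mathbb{R}$. $f\geq g$ means pointwise $\geq$; $f\gneq g$ means $f\geq g$ and $f\neq g$; $\mathcal{G}_{\gneq 0}=\{f: f\gneq 0\}$. $\mathrm{posi}(B)=\{\sum_{i=1}^m\lambda_i h_i: m\geq1,\lambda_i>0,h_i\in B\}$. A set $D\subseteq\mathcal{G}$ is coherent if $0\notin D$; $\mathcal{G}_{\gneq0}\subseteq D$; $\lambda g\in D$ whenever $g\in D,\lambda>0$; and $f+g\in D$ whenever $f,g\in D$. A set $\mathcal{K}\subseteq\wp(\mathcal{G})$ is coherent if: (K$_\emptyset$) $\emptyset\notin\mathcal{K}$; (K$_0$) if $A\in\mathcal{K}$ then $A\setminus\{0\}\in\mathcal{K}$; (K$_{\gneq0}$) if $g\in\mathcal{G}_{\gneq0}$ then $\{g\}\in\mathcal{K}$; (K$_\supseteq$) if $A\in\mathcal{K}$ and $B\supseteq A$ then $B\in\mathcal{K}$; (K$_{\mathrm{Dom}}$) if $A\in\mathcal{K}$ and for each $g\in A$, $f_g$ is a gamble with $f_g\geq g$, then $\{f_g: g\in A\}\in\mathcal{K}$; (K$_{\mathrm{Add}}$) if $A_1,\ldots,A_n\in\mathcal{K}$ (finitely many) and for each $\langle g_1,\ldots,g_n\rangle\in A_1\times\cdots\times A_n$, $f_{\langle g_1,\ldots,g_n\rangle}$ is some member of $\mathrm{posi}(\{g_1,\ldots,g_n\})$, then $\{f_{\langle g_1,\ldots,g_n\rangle}:\langle g_1,\ldots,g_n\rangle\in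 A_1\times\cdots\times A_n\}\in\mathcal{K}$. *)

theory Defs
  imports Complex_Main "HOL-Library.FuncSet"
begin

text \<open>Gambles on \<Omega> (represented by the type 'a; HOL types are nonempty):
  bounded real-valued functions.\<close>
definition gambles :: "('a \<Rightarrow> real) set" where
  "gambles = {f. \<exists>c. \<forall>x. \<bar>f x\<bar> \<le> c}"

definition pos_gambles :: "('a \<Rightarrow> real) set" where
  "pos_gambles = {f \<in> gambles. (\<forall>x. f x \<ge> 0) \<and> f \<noteq> (\<lambda>x. 0)}"

definition posi :: "('a \<Rightarrow> real) set \<Rightarrow> ('a \<Rightarrow> real) set" where
  "posi B = {g. \<exists>m::nat. m \<ge> 1 \<and> (\<exists>l h. (\<forall>i<m. l i > (0::real) \<and> h i \<in> B)
                 \<and> g = (\<lambda>x. \<Sum>i<m. l i * h i x))}"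

definition coherent_D :: "('a \<Rightarrow> real) set \<Rightarrow> bool" where
  "coherent_D D \<longleftrightarrow> D \<subseteq> gambles \<and> (\<lambda>x. 0) \<notin> D \<and> pos_gambles \<subseteq> D
     \<and> (\<forall>g\<in>D. \<forall>c::real. c > 0 \<longrightarrow> (\<lambda>x. c * g x) \<in> D)
     \<and> (\<forall>f\<in>D. \<forall>g\<in>D. (\<lambda>x. f x + g x) \<in> D)"

definition coherent_sets :: "('a \<Rightarrow> real) set set" where
  "coherent_sets = {D. coherent_D D}"

definition coherent_K :: "('a \<Rightarrow> real) set set \<Rightarrow> bool" where
  "coherent_K K \<longleftrightarrow>
     {} \<notin> K
   \<and> (\<forall>A\<in>K. A - {\<lambda>x. 0} \<in> K)
   \<and> (\<forall>g\<in>pos_gambles. {g} \<in> K)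
   \<and> (\<forall>A\<in>K. \<forall>B. A \<subseteq> B \<and> B \<subseteq> gambles \<longrightarrow> B \<in> K)
   \<and> (\<forall>A\<in>K. \<forall>f. (\<forall>g\<in>A. f g \<in> gambles \<and> (\<forall>x. f g x \<ge> g x)) \<longrightarrow> f ` A \<in> K)
   \<and> (\<forall>(n::nat) (A::nat \<Rightarrow> ('a \<Rightarrow> real) set) f.
        (\<forall>i<n. A i \<in> K) \<and> (\<forall>g\<in>PiE {..<n} A. f g \<in> posi (g ` {..<n}))
        \<longrightarrow> f ` (PiE {..<n} A) \<in> K)"

definition proper_filter_on :: "'b set set \<Rightarrow> 'b set \<Rightarrow> bool" where
  "proper_filter_on F C \<longleftrightarrow> F \<subseteq> Pow C \<and> F \<noteq> {} \<and> {} \<notin> F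
     \<and> (\<forall>D1\<in>F. \<forall>D2\<in>F. D1 \<inter> D2 \<in> F)
     \<and> (\<forall>D1\<in>F. \<forall>D2. D1 \<subseteq> D2 \<and> D2 \<subseteq> C \<longrightarrow> D2 \<in> F)"

definition represents :: "('a \<Rightarrow> real) set set \<Rightarrow> ('a \<Rightarrow> real) set set set \<Rightarrow> bool" where
  "represents K F \<longleftrightarrow> (\<forall>B. B \<subseteq> gambles \<longrightarrow>
      (B \<in> K \<longleftrightarrow> (\<exists>DD\<in>F. \<forall>D\<in>DD. B \<inter> D \<noteq> {})))"

end

theory Submission
  imports Defs
begin


lemma sum_split_add: "(\<Sum>i<m1+m2. F i) = (\<Sum>i<m1. F i) + (\<Sum>i<m2. F (m1+i)) " for F :: "nat \<Rightarrow> real"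
  by (induction m2) auto

lemma gambles_add: "f \<in> gambles \<Longrightarrow> g \<in> gambles \<Longrightarrow> (\<lambda>x. f x + g x) \<in> gambles"
proof -
  assume "f \<in> gambles" "g \<in> gambles"
  then obtain a b where a: "\<forall>x. \<bar>f x\<bar> \<le> a" and b: "\<forall>x. \<bar>g x\<bar> \<le> b" unfolding gambles_def by auto
  have "\<bar>f x + g x\<bar> \<le> a + b" for x
  proof -
    have "\<bar>f x + g x\<bar> \<le> \<bar>f x\<bar> + \<bar>g x\<bar>" by (rule abs_triangle_ineq)
    then show ?thesis using a[rule_format, of x] b[rule_format, of x] by linarith
  qed
  then show ?thesis unfolding gambles_def by blast
qed

lemma gambles_scale: "f \<in> gambles \<Longrightarrow> (\<lambda>x. t * f x) \<in> gambles"
proof -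
  assume "f \<in> gambles"
  then obtain a where a: "\<forall>x. \<bar>f x\<bar> \<le> a" unfolding gambles_def by auto
  have "\<forall>x. \<bar>t * f x\<bar> \<le> \<bar>t\<bar> * a"
    using a by (simp add: abs_mult mult_left_mono)
  then show ?thesis unfolding gambles_def by auto
qed

lemma gambles_sum: "(\<forall>i<(m::nat). h i \<in> gambles) \<Longrightarrow> (\<lambda>x. \<Sum>i<m. l i * h i x) \<in> gambles"
proof (induction m)
  case 0
  then show ?case unfolding gambles_def by auto
next
  case (Suc m)
  then have "(\<lambda>x. \<Sum>i<m. l i * h i x) \<in> gambles" by auto
  moreover have "(\<lambda>x. l m * h m x) \<in> gambles" using Suc.prems gambles_scale by auto
  ultimately show ?case using gambles_add[of "\<lambda>x. \<Sum>i<m. l i * h i x" "\<lambda>x. l m * h m x"] by simp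
qed

lemma posiI: "(m::nat) \<ge> 1 \<Longrightarrow> \<forall>i<m. l i > (0::real) \<and> h i \<in> S \<Longrightarrow> g = (\<lambda>x. \<Sum>i<m. l i * h i x) \<Longrightarrow> g \<in> posi S"
  unfolding posi_def
  apply (rule CollectI)
  apply (rule exI[of _ m])
  apply (rule conjI, assumption)
  apply (rule exI[of _ l])
  apply (rule exI[of _ h])
  apply (rule conjI)
   apply assumption+
  done

lemma posiE: "g \<in> posi S \<Longrightarrow> (\<And>(m::nat) l h. m \<ge> 1 \<Longrightarrow> \<forall>i<m. l i > (0::real) \<and> h i \<in> S \<Longrightarrow> g = (\<lambda>x. \<Sum>i<m. l i * h i x) \<Longrightarrow> P) \<Longrightarrow> P"
  unfolding posi_def by auto

lemma posi_gambles: "S \<subseteq> gambles \<Longrightarrow> posi S \<subseteq> gambles"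
proof
  fix c assume S: "S \<subseteq> gambles" and c: "c \<in> posi S"
  from c obtain m l h where "\<forall>i<(m::nat). l i > (0::real) \<and> h i \<in> S" "c = (\<lambda>x. \<Sum>i<m. l i * h i x)"
    by (rule posiE) blast
  moreover have "\<forall>i<m. h i \<in> gambles" using calculation(1) S by blast
  ultimately show "c \<in> gambles" using gambles_sum[of m h l] by simp
qed

lemma posi_single: "h \<in> S \<Longrightarrow> h \<in> posi S"
  by (rule posiI[of 1 "\<lambda>_. 1" "\<lambda>_. h"]) auto

lemma posi_add: assumes "c \<in> posi S" "d \<in> posi S" shows "(\<lambda>x. c x + d x) \<in> posi S"
proof -
  obtain m1 l1 h1 where 1: "(m1::nat) \<ge> 1" "\<forall>i<m1. l1 i > 0 \<and> h1 i \<in> S" "c = (\<lambda>x. \<Sum>i<m1. l1 i * h1 i x)"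
    by (rule posiE[OF assms(1)]) blast
  obtain m2 l2 h2 where 2: "(m2::nat) \<ge> 1" "\<forall>i<m2. l2 i > 0 \<and> h2 i \<in> S" "d = (\<lambda>x. \<Sum>i<m2. l2 i * h2 i x)"
    by (rule posiE[OF assms(2)]) blast
  define l where "l i = (if i < m1 then l1 i else l2 (i - m1))" for i
  define h where "h i = (if i < m1 then h1 i else h2 (i - m1))" for i
  have "\<forall>i<m1+m2. l i > 0 \<and> h i \<in> S" using 1 2 unfolding l_def h_def by auto
  moreover have "(\<lambda>x. c x + d x) = (\<lambda>x. \<Sum>i<m1+m2. l i * h i x)"
  proof
    fix x
    have "(\<Sum>i<m1+m2. l i * h i x) = (\<Sum>i<m1. l i * h i x) + (\<Sum>i<m2. l (m1+i) * h (m1+i) x)"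
      by (rule sum_split_add)
    also have "(\<Sum>i<m1. l i * h i x) = (\<Sum>i<m1. l1 i * h1 i x)"
      by (rule sum.cong) (simp_all add: l_def h_def)
    also have "(\<Sum>i<m2. l (m1+i) * h (m1+i) x) = (\<Sum>i<m2. l2 i * h2 i x)"
      by (rule sum.cong) (simp_all add: l_def h_def)
    finally show "c x + d x = (\<Sum>i<m1+m2. l i * h i x)" using 1(3) 2(3) by simp
  qed
  ultimately show ?thesis using 1 by (intro posiI[of "m1+m2" l h]) auto
qed

lemma posi_scale: assumes "c \<in> posi S" "t > 0" shows "(\<lambda>x. t * c x) \<in> posi S"
proof -
  obtain m1 l1 h1 where 1: "(m1::nat) \<ge> 1" "\<forall>i<m1. l1 i > 0 \<and> h1 i \<in> S" "c = (\<lambda>x. \<Sum>i<m1. l1 i * h1 i x)"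
    by (rule posiE[OF assms(1)]) blast
  have "(\<lambda>x. t * c x) = (\<lambda>x. \<Sum>i<m1. (t * l1 i) * h1 i x)"
    unfolding 1 by (simp add: sum_distrib_left mult.assoc)
  moreover have "\<forall>i<m1. t * l1 i > 0 \<and> h1 i \<in> S" using 1 assms(2) by auto
  ultimately show ?thesis using 1 by (intro posiI[of m1 "\<lambda>i. t * l1 i" h1]) auto
qed

lemma cD_parts:
  assumes "coherent_D D"
  shows cD_gam: "D \<subseteq> gambles" and cD_0: "(\<lambda>x. 0) \<notin> D" and cD_pos: "pos_gambles \<subseteq> D"
    and cD_scale0: "\<forall>g\<in>D. \<forall>c::real. c > 0 \<longrightarrow> (\<lambda>x. c * g x) \<in> D"
    and cD_add0: "\<forall>f\<in>D. \<forall>g\<in>D. (\<lambda>x. f x + g x) \<in> D"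
proof -
  note H = assms[unfolded coherent_D_def]
  show "D \<subseteq> gambles" by (rule conjunct1[OF H])
  show "(\<lambda>x. 0) \<notin> D" by (rule conjunct1[OF conjunct2[OF H]])
  show "pos_gambles \<subseteq> D" by (rule conjunct1[OF conjunct2[OF conjunct2[OF H]]])
  show "\<forall>g\<in>D. \<forall>c::real. c > 0 \<longrightarrow> (\<lambda>x. c * g x) \<in> D"
    by (rule conjunct1[OF conjunct2[OF conjunct2[OF conjunct2[OF H]]]])
  show "\<forall>f\<in>D. \<forall>g\<in>D. (\<lambda>x. f x + g x) \<in> D"
    by (rule conjunct2[OF conjunct2[OF conjunct2[OF conjunct2[OF H]]]])
qed

lemma cD_scale: assumes "coherent_D D" "g \<in> D" "c > 0" shows "(\<lambda>x. c * g x) \<in> D"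
proof -
  have "\<forall>c::real. c > 0 \<longrightarrow> (\<lambda>x. c * g x) \<in> D" using cD_scale0[OF assms(1)] assms(2) by (rule bspec)
  then show ?thesis using assms(3) by (elim allE impE)
qed
lemma cD_add: assumes "coherent_D D" "f \<in> D" "g \<in> D" shows "(\<lambda>x. f x + g x) \<in> D"
proof -
  have "\<forall>g\<in>D. (\<lambda>x. f x + g x) \<in> D" using cD_add0[OF assms(1)] assms(2) by (rule bspec)
  then show ?thesis using assms(3) by (rule bspec)
qed

lemma posi_sub_D: assumes "coherent_D D" "S \<subseteq> D" shows "posi S \<subseteq> D"
proof
  fix c assume "c \<in> posi S"
  then obtain m l h where 1: "(m::nat) \<ge> 1" "\<forall>i<m. l i > 0 \<and> h i \<in> S" "c = (\<lambda>x. \<Sum>i<m. l i * h i x)"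
    by (rule posiE) blast
  have "(m::nat) \<ge> 1 \<longrightarrow> (\<forall>i<m. l i > 0 \<and> h i \<in> S) \<longrightarrow> (\<lambda>x. \<Sum>i<m. l i * h i x) \<in> D" for m
  proof (induction m)
    case 0 then show ?case by simp
  next
    case (Suc m)
    show ?case
    proof (intro impI)
      assume a: "\<forall>i<Suc m. 0 < l i \<and> h i \<in> S"
      have t: "(\<lambda>x. l m * h m x) \<in> D" using cD_scale[OF assms(1)] a assms(2) by blast
      show "(\<lambda>x. \<Sum>i<Suc m. l i * h i x) \<in> D"
      proof (cases "m = 0")
        case True then show ?thesis using t by simp
      next
        case False
        then have "(\<lambda>x. \<Sum>i<m. l i * h i x) \<in> D" using Suc.IH a by auto
        then show ?thesis using cD_add[OF assms(1) _ t] by simp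
      qed
    qed
  qed
  then show "c \<in> D" using 1 by simp
qed

lemma pos_add: "p \<in> pos_gambles \<Longrightarrow> q \<in> pos_gambles \<Longrightarrow> (\<lambda>x. p x + q x) \<in> pos_gambles"
proof -
  assume p: "p \<in> pos_gambles" and q: "q \<in> pos_gambles"
  have "(\<lambda>x. p x + q x) \<noteq> (\<lambda>x. 0)"
  proof
    assume "(\<lambda>x. p x + q x) = (\<lambda>x. 0)"
    then have e: "p x + q x = 0" for x by (rule fun_cong)
    have "p x \<ge> 0" "q x \<ge> 0" for x using p q unfolding pos_gambles_def by auto
    then have "\<forall>x. p x = 0" using e by (smt (verit))
    then show False using p unfolding pos_gambles_def by auto
  qed
  moreover have "(\<lambda>x. p x + q x) \<in> gambles" using gambles_add p q unfolding pos_gambles_def by blast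
  moreover have "\<forall>x. p x + q x \<ge> 0" using p q unfolding pos_gambles_def by (simp add: add_nonneg_nonneg)
  ultimately show ?thesis by (simp add: pos_gambles_def)
qed

lemma pos_scale: "p \<in> pos_gambles \<Longrightarrow> t > 0 \<Longrightarrow> (\<lambda>x. t * p x) \<in> pos_gambles"
proof -
  assume p: "p \<in> pos_gambles" and t: "t > 0"
  have "(\<lambda>x. t * p x) \<noteq> (\<lambda>x. 0)"
  proof
    assume "(\<lambda>x. t * p x) = (\<lambda>x. 0)"
    then have e: "t * p x = 0" for x by (rule fun_cong)
    then have "\<forall>x. p x = 0" using t by simp
    then show False using p unfolding pos_gambles_def by auto
  qed
  moreover have "(\<lambda>x. t * p x) \<in> gambles" using gambles_scale p unfolding pos_gambles_def by blast
  moreover have "\<forall>x. t * p x \<ge> 0" using p t unfolding pos_gambles_def by simp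
  ultimately show ?thesis by (simp add: pos_gambles_def)
qed

lemma coherent_up: assumes "coherent_D D" "g \<in> D" "f \<in> gambles" "\<forall>x. g x \<le> f x" shows "f \<in> D"
proof (cases "f = g")
  case True then show ?thesis using assms by simp
next
  case False
  have gg: "g \<in> gambles" using cD_gam[OF assms(1)] assms(2) by blast
  have "(\<lambda>x. f x - g x) \<in> gambles" using gambles_add[OF assms(3) gambles_scale[OF gg, of "-1"]] by simp
  moreover have "(\<lambda>x. f x - g x) \<noteq> (\<lambda>x. 0)"
  proof
    assume "(\<lambda>x. f x - g x) = (\<lambda>x. 0)"
    then have "f x - g x = 0" for x by (rule fun_cong)
    then have "f = g" by auto
    then show False using False by simp
  qed
  ultimately have "(\<lambda>x. f x - g x) \<in> pos_gambles" using assms(4) unfolding pos_gambles_def by auto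
  then have "(\<lambda>x. g x + (f x - g x)) \<in> D" using cD_add[OF assms(1) assms(2)] cD_pos[OF assms(1)] by blast
  then show ?thesis by simp
qed

definition N :: "('a \<Rightarrow> real) set \<Rightarrow> ('a \<Rightarrow> real) set" where
  "N S = pos_gambles \<union> {h \<in> gambles. \<exists>c\<in>posi S. \<forall>x. c x \<le> h x}"

lemma N_elim: "h \<in> N S \<Longrightarrow> h \<notin> pos_gambles \<Longrightarrow> \<exists>c\<in>posi S. \<forall>x. c x \<le> h x"
  unfolding N_def by blast
lemma N_intro: "h \<in> gambles \<Longrightarrow> c \<in> posi S \<Longrightarrow> \<forall>x. c x \<le> h x \<Longrightarrow> h \<in> N S"
  unfolding N_def by blast

lemma N_gambles: "N S \<subseteq> gambles"
  unfolding N_def pos_gambles_def by blast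

lemma N_coherent: assumes "S \<subseteq> gambles" "\<not> (\<exists>c\<in>posi S. \<forall>x. c x \<le> 0)"
  shows "coherent_D (N S)"
  unfolding coherent_D_def
proof (intro conjI)
  show "N S \<subseteq> gambles" unfolding N_def pos_gambles_def by auto
  show "(\<lambda>x. 0) \<notin> N S" using assms(2) unfolding N_def pos_gambles_def by auto
  show "pos_gambles \<subseteq> N S" unfolding N_def by auto
  show "\<forall>g\<in>N S. \<forall>t::real. t > 0 \<longrightarrow> (\<lambda>x. t * g x) \<in> N S"
  proof (intro ballI allI impI)
    fix g and t :: real assume g: "g \<in> N S" and t: "t > 0"
    show "(\<lambda>x. t * g x) \<in> N S"
    proof (cases "g \<in> pos_gambles")
      case True show ?thesis unfolding N_def by (rule UnI1[OF pos_scale[OF True t]])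
    next
      case False
      then obtain c where c: "c \<in> posi S" "\<forall>x. c x \<le> g x" "g \<in> gambles" using g unfolding N_def by auto
      have "(\<lambda>x. t * c x) \<in> posi S" using posi_scale[OF c(1) t] .
      moreover have "\<forall>x. t * c x \<le> t * g x" using c t by simp
      moreover have "(\<lambda>x. t * g x) \<in> gambles" using gambles_scale[OF c(3)] by blast
      ultimately show ?thesis unfolding N_def
        by (intro UnI2 CollectI conjI bexI[of _ "\<lambda>x. t * c x"]) auto
    qed
  qed
  show "\<forall>f\<in>N S. \<forall>g\<in>N S. (\<lambda>x. f x + g x) \<in> N S"
  proof (intro ballI)
    fix f g assume f: "f \<in> N S" and g: "g \<in> N S"
    have fg: "f \<in> gambles" "g \<in> gambles" using f g N_gambles by auto
    have gf: "(\<lambda>x. f x + g x) \<in> gambles" using gambles_add[OF fg] by simp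
    have pge: "\<And>p x. p \<in> pos_gambles \<Longrightarrow> p x \<ge> 0" unfolding pos_gambles_def by blast
    show "(\<lambda>x. f x + g x) \<in> N S"
    proof (cases "f \<in> pos_gambles")
      case fp: True
      show ?thesis
      proof (cases "g \<in> pos_gambles")
        case True show ?thesis unfolding N_def by (rule UnI1[OF pos_add[OF fp True]])
      next
        case False
        then obtain d where d: "d \<in> posi S" "\<forall>x. d x \<le> g x" using N_elim g by blast
        have "d x \<le> f x + g x" for x using d(2) pge[OF fp, of x] by (metis add_increasing)
        then show ?thesis using N_intro[OF gf d(1)] by blast
      qed
    next
      case False
      then obtain c where c: "c \<in> posi S" "\<forall>x. c x \<le> f x" using N_elim f by blast
      show ?thesis
      proof (cases "g \<in> pos_gambles")
        case gp: True
        have "c x \<le> f x + g x" for x using c(2) pge[OF gp, of x] by (metis add_increasing2)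
        then show ?thesis using N_intro[OF gf c(1)] by blast
      next
        case False
        then obtain d where d: "d \<in> posi S" "\<forall>x. d x \<le> g x" using N_elim g by blast
        have "\<forall>x. c x + d x \<le> f x + g x" using c d by (simp add: add_mono)
        moreover have "(\<lambda>x. c x + d x) \<in> posi S" using posi_add[OF c(1) d(1)] .
        ultimately show ?thesis using N_intro[OF gf, of "\<lambda>x. c x + d x"] by blast
      qed
    qed
  qed
qed


lemma cK_parts:
  assumes "coherent_K K"
  shows "{} \<notin> K"
   "\<forall>A\<in>K. A - {\<lambda>x. 0} \<in> K"
   "\<forall>g\<in>pos_gambles. {g} \<in> K"
   "\<forall>A\<in>K. \<forall>B. A \<subseteq> B \<and> B \<subseteq> gambles \<longrightarrow> B \<in> K"
   "\<forall>A\<in>K. \<forall>f. (\<forall>g\<in>A. f g \<in> gambles \<and> (\<forall>x. f g x \<ge> g x)) \<longrightarrow> f ` A \<in> K"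
   "\<forall>(n::nat) (A::nat \<Rightarrow> ('a \<Rightarrow> real) set) f.
        (\<forall>i<n. A i \<in> K) \<and> (\<forall>g\<in>PiE {..<n} A. f g \<in> posi (g ` {..<n}))
        \<longrightarrow> f ` (PiE {..<n} A) \<in> K"
proof -
  note H = assms[unfolded coherent_K_def]
  show "{} \<notin> K" by (rule conjunct1[OF H])
  show "\<forall>A\<in>K. A - {\<lambda>x. 0} \<in> K" by (rule conjunct1[OF conjunct2[OF H]])
  show "\<forall>g\<in>pos_gambles. {g} \<in> K" by (rule conjunct1[OF conjunct2[OF conjunct2[OF H]]])
  show "\<forall>A\<in>K. \<forall>B. A \<subseteq> B \<and> B \<subseteq> gambles \<longrightarrow> B \<in> K"
    by (rule conjunct1[OF conjunct2[OF conjunct2[OF conjunct2[OF H]]]])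
  show "\<forall>A\<in>K. \<forall>f. (\<forall>g\<in>A. f g \<in> gambles \<and> (\<forall>x. f g x \<ge> g x)) \<longrightarrow> f ` A \<in> K"
    by (rule conjunct1[OF conjunct2[OF conjunct2[OF conjunct2[OF conjunct2[OF H]]]]])
  show "\<forall>(n::nat) (A::nat \<Rightarrow> ('a \<Rightarrow> real) set) f.
        (\<forall>i<n. A i \<in> K) \<and> (\<forall>g\<in>PiE {..<n} A. f g \<in> posi (g ` {..<n}))
        \<longrightarrow> f ` (PiE {..<n} A) \<in> K"
    by (rule conjunct2[OF conjunct2[OF conjunct2[OF conjunct2[OF conjunct2[OF H]]]]])
qed

lemma cK_empty: "coherent_K K \<Longrightarrow> {} \<notin> K"
  by (rule cK_parts(1))
lemma cK_0: "coherent_K K \<Longrightarrow> A \<in> K \<Longrightarrow> A - {\<lambda>x. 0} \<in> K"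
  using cK_parts(2) by blast
lemma cK_pos: "coherent_K K \<Longrightarrow> g \<in> pos_gambles \<Longrightarrow> {g} \<in> K"
  using cK_parts(3) by blast
lemma cK_sup: "coherent_K K \<Longrightarrow> A \<in> K \<Longrightarrow> A \<subseteq> B \<Longrightarrow> B \<subseteq> gambles \<Longrightarrow> B \<in> K"
  using cK_parts(4) by blast
lemma cK_dom: "coherent_K K \<Longrightarrow> A \<in> K \<Longrightarrow> (\<forall>g\<in>A. f g \<in> gambles \<and> (\<forall>x. f g x \<ge> g x)) \<Longrightarrow> f ` A \<in> K"
proof -
  assume a: "coherent_K K" "A \<in> K" "\<forall>g\<in>A. f g \<in> gambles \<and> (\<forall>x. f g x \<ge> g x)"
  have "\<forall>f. (\<forall>g\<in>A. f g \<in> gambles \<and> (\<forall>x. f g x \<ge> g x)) \<longrightarrow> f ` A \<in> K"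
    using cK_parts(5)[OF a(1)] a(2) by (rule bspec)
  then show ?thesis using a(3) by blast
qed
lemma cK_add: "coherent_K K \<Longrightarrow> (\<forall>i<(n::nat). A i \<in> K) \<Longrightarrow> (\<forall>g\<in>PiE {..<n} A. f g \<in> posi (g ` {..<n})) \<Longrightarrow> f ` (PiE {..<n} A) \<in> K"
proof -
  assume a: "coherent_K K" "\<forall>i<n. A i \<in> K" "\<forall>g\<in>PiE {..<n} A. f g \<in> posi (g ` {..<n})"
  have "(\<forall>i<n. A i \<in> K) \<and> (\<forall>g\<in>PiE {..<n} A. f g \<in> posi (g ` {..<n})) \<longrightarrow> f ` (PiE {..<n} A) \<in> K"
    by (rule cK_parts(6)[OF a(1), THEN spec[of _ n], THEN spec[of _ A], THEN spec[of _ f]])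
  then show ?thesis using a(2,3) by blast
qed



lemma key:
  assumes KC: "coherent_K K" and Kg: "K \<subseteq> Pow gambles"
    and A: "\<forall>i<(n::nat). A i \<in> K" and Bg: "B \<subseteq> gambles"
    and H: "\<forall>D\<in>coherent_sets. (\<forall>i<n. A i \<inter> D \<noteq> {}) \<longrightarrow> B \<inter> D \<noteq> {}"
  shows "B \<in> K"
proof (cases "B \<inter> pos_gambles = {}")
  case False
  then obtain b where b: "b \<in> B" "b \<in> pos_gambles" by auto
  then have bK: "{b} \<in> K" using cK_pos[OF KC] by simp
  have "{b} \<subseteq> B" using b by simp
  then show ?thesis by (rule cK_sup[OF KC bK _ Bg])
next
  case Bpos: True
  define P where "P g c \<longleftrightarrow> c \<in> posi (g ` {..<n}) \<and> ((\<forall>x. c x \<le> 0) \<or> (\<exists>b\<in>B. \<forall>x. c x \<le> b x))" for g c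
  have ex: "\<exists>c. P g c" if g: "g \<in> PiE {..<n} A" for g
  proof (cases "\<exists>c\<in>posi (g ` {..<n}). \<forall>x. c x \<le> 0")
    case True
    then obtain c where c: "c \<in> posi (g ` {..<n})" "\<forall>x. c x \<le> 0" by blast
    have "P g c" unfolding P_def using c by (intro conjI disjI1)
    then show ?thesis by (rule exI[where x=c])
  next
    case False
    have Sg: "g ` {..<n} \<subseteq> gambles"
    proof
      fix y assume "y \<in> g ` {..<n}"
      then obtain i where i: "i < n" "y = g i" by blast
      have "g i \<in> A i" using g i(1) by (simp add: PiE_def Pi_def)
      moreover have "A i \<subseteq> gambles" using A i(1) Kg by blast
      ultimately show "y \<in> gambles" using i(2) by blast
    qed
    have "coherent_D (N (g ` {..<n}))" by (rule N_coherent[OF Sg False])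
    then have coh: "N (g ` {..<n}) \<in> coherent_sets" by (simp add: coherent_sets_def)
    have "\<forall>i<n. A i \<inter> N (g ` {..<n}) \<noteq> {}"
    proof (intro allI impI)
      fix i assume i: "i < n"
      have "g i \<in> A i" using g i by (simp add: PiE_def Pi_def)
      moreover have gi: "g i \<in> g ` {..<n}" using i by simp
      then have "g i \<in> posi (g ` {..<n})" by (rule posi_single)
      moreover have "g i \<in> gambles" using Sg gi by (rule subsetD)
      moreover have "g i \<in> N (g ` {..<n})" using N_intro[OF \<open>g i \<in> gambles\<close> \<open>g i \<in> posi (g ` {..<n})\<close>] by simp
      ultimately show "A i \<inter> N (g ` {..<n}) \<noteq> {}" by blast
    qed
    then have "B \<inter> N (g ` {..<n}) \<noteq> {}" using H coh by blast
    then obtain b where b: "b \<in> B" "b \<in> N (g ` {..<n})" by blast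
    have "b \<notin> pos_gambles" using Bpos b(1) by blast
    then obtain c where c: "c \<in> posi (g ` {..<n})" "\<forall>x. c x \<le> b x" using N_elim[OF b(2)] by blast
    have "\<exists>b\<in>B. \<forall>x. c x \<le> b x" using c(2) b(1) by blast
    then have "P g c" unfolding P_def using c(1) by (intro conjI disjI2)
    then show ?thesis by (rule exI[where x=c])
  qed
  define f where "f g = (SOME c. P g c)" for g
  have fP: "P g (f g)" if "g \<in> PiE {..<n} A" for g
    unfolding f_def using ex[OF that] by (rule someI_ex)
  have fposi: "\<forall>g\<in>PiE {..<n} A. f g \<in> posi (g ` {..<n})"
    using fP unfolding P_def by simp
  have K1: "f ` PiE {..<n} A \<in> K"
    by (rule cK_add[OF KC A fposi])
  define \<phi> where "\<phi> c = (if (\<forall>x. c x \<le> (0::real)) then (\<lambda>x. 0) else (SOME b. b \<in> B \<and> (\<forall>x. c x \<le> b x)))" for c :: "'a \<Rightarrow> real"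
  have \<phi>: "\<phi> c \<in> gambles \<and> (\<forall>x. \<phi> c x \<ge> c x) \<and> (\<phi> c = (\<lambda>x. 0) \<or> \<phi> c \<in> B)"
    if cin: "c \<in> f ` PiE {..<n} A" for c
  proof -
    obtain g where g: "g \<in> PiE {..<n} A" "c = f g" using cin by blast
    show ?thesis
    proof (cases "\<forall>x. c x \<le> (0::real)")
      case True
      then have e: "\<phi> c = (\<lambda>x. 0)" unfolding \<phi>_def by simp
      have "(\<lambda>x. 0::real) \<in> gambles" unfolding gambles_def by auto
      then show ?thesis using e True by simp
    next
      case False
      have "P g c" using fP[OF g(1)] g(2) by simp
      then have "(\<forall>x. c x \<le> 0) \<or> (\<exists>b\<in>B. \<forall>x. c x \<le> b x)" unfolding P_def by simp
      then have "\<exists>b\<in>B. \<forall>x. c x \<le> b x" using False by simp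
      then have "\<exists>b. b \<in> B \<and> (\<forall>x. c x \<le> b x)" by blast
      then have "(SOME b. b \<in> B \<and> (\<forall>x. c x \<le> b x)) \<in> B \<and> (\<forall>x. c x \<le> (SOME b. b \<in> B \<and> (\<forall>x. c x \<le> b x)) x)"
        by (rule someI_ex)
      moreover have "\<phi> c = (SOME b. b \<in> B \<and> (\<forall>x. c x \<le> b x))" unfolding \<phi>_def by (rule if_not_P[OF False])
      ultimately have "\<phi> c \<in> B \<and> (\<forall>x. c x \<le> \<phi> c x)" by simp
      then show ?thesis using Bg by blast
    qed
  qed
  have \<phi>1: "\<forall>c\<in>f ` PiE {..<n} A. \<phi> c \<in> gambles \<and> (\<forall>x. \<phi> c x \<ge> c x)"
    using \<phi> by blast
  have K2: "\<phi> ` (f ` PiE {..<n} A) \<in> K"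
    by (rule cK_dom[OF KC K1 \<phi>1])
  then have K3: "\<phi> ` (f ` PiE {..<n} A) - {\<lambda>x. 0} \<in> K"
    by (rule cK_0[OF KC])
  have "\<phi> ` (f ` PiE {..<n} A) - {\<lambda>x. 0} \<subseteq> B"
  proof
    fix y assume "y \<in> \<phi> ` (f ` PiE {..<n} A) - {\<lambda>x. 0}"
    then obtain c where c: "c \<in> f ` PiE {..<n} A" "y = \<phi> c" "y \<noteq> (\<lambda>x. 0)" by blast
    then show "y \<in> B" using \<phi>[OF c(1)] by blast
  qed
  then show ?thesis by (rule cK_sup[OF KC K3 _ Bg])
qed



definition FK :: "('a \<Rightarrow> real) set set \<Rightarrow> ('a \<Rightarrow> real) set set set" where
  "FK K = {DD. DD \<subseteq> coherent_sets \<and> (\<exists>(n::nat) A. (\<forall>i<n. A i \<in> K) \<and>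
      (\<forall>D\<in>coherent_sets. (\<forall>i<n. A i \<inter> D \<noteq> {}) \<longrightarrow> D \<in> DD))}"

lemma FK_I: "DD \<subseteq> coherent_sets \<Longrightarrow> \<forall>i<(n::nat). A i \<in> K \<Longrightarrow>
    \<forall>D\<in>coherent_sets. (\<forall>i<n. A i \<inter> D \<noteq> {}) \<longrightarrow> D \<in> DD \<Longrightarrow> DD \<in> FK K"
  unfolding FK_def
  apply (rule CollectI)
  apply (rule conjI, assumption)
  apply (rule exI[of _ n])
  apply (rule exI[of _ A])
  apply (rule conjI)
   apply assumption+
  done

lemma FK_E: "DD \<in> FK K \<Longrightarrow> (\<And>(n::nat) A. DD \<subseteq> coherent_sets \<Longrightarrow> \<forall>i<n. A i \<in> K \<Longrightarrow>
    \<forall>D\<in>coherent_sets. (\<forall>i<n. A i \<inter> D \<noteq> {}) \<longrightarrow> D \<in> DD \<Longrightarrow> P) \<Longrightarrow> P"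
  unfolding FK_def by auto

lemma FK_filter: assumes KC: "coherent_K K" and Kg: "K \<subseteq> Pow gambles"
  shows "proper_filter_on (FK K) coherent_sets"
  unfolding proper_filter_on_def
proof (intro conjI)
  show "FK K \<subseteq> Pow coherent_sets" by (auto elim: FK_E)
  have "coherent_sets \<in> FK K" by (rule FK_I[of _ 0]) auto
  then show "FK K \<noteq> {}" by auto
  show "{} \<notin> FK K"
  proof
    assume "{} \<in> FK K"
    then obtain n A where A: "\<forall>i<(n::nat). A i \<in> K"
      "\<forall>D\<in>coherent_sets. (\<forall>i<n. A i \<inter> D \<noteq> {}) \<longrightarrow> D \<in> {}" by (rule FK_E) blast
    have "{} \<in> K" by (rule key[OF KC Kg A(1)]) (use A(2) in auto)
    then show False using cK_empty[OF KC] by simp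
  qed
  show "\<forall>D1\<in>FK K. \<forall>D2\<in>FK K. D1 \<inter> D2 \<in> FK K"
  proof (intro ballI)
    fix D1 D2 assume d1: "D1 \<in> FK K" and d2: "D2 \<in> FK K"
    obtain n1 A1 where 1: "\<forall>i<(n1::nat). A1 i \<in> K"
      "\<forall>D\<in>coherent_sets. (\<forall>i<n1. A1 i \<inter> D \<noteq> {}) \<longrightarrow> D \<in> D1" "D1 \<subseteq> coherent_sets"
      using d1 by (rule FK_E) blast
    obtain n2 A2 where 2: "\<forall>i<(n2::nat). A2 i \<in> K"
      "\<forall>D\<in>coherent_sets. (\<forall>i<n2. A2 i \<inter> D \<noteq> {}) \<longrightarrow> D \<in> D2"
      using d2 by (rule FK_E) blast
    define A where "A i = (if i < n1 then A1 i else A2 (i - n1))" for i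
    have "\<forall>i<n1+n2. A i \<in> K" using 1 2 unfolding A_def by auto
    moreover have "\<forall>D\<in>coherent_sets. (\<forall>i<n1+n2. A i \<inter> D \<noteq> {}) \<longrightarrow> D \<in> D1 \<inter> D2"
    proof (intro ballI impI)
      fix D assume D: "D \<in> coherent_sets" and h: "\<forall>i<n1+n2. A i \<inter> D \<noteq> {}"
      have "\<forall>i<n1. A1 i \<inter> D \<noteq> {}"
      proof (intro allI impI)
        fix i assume "i < n1" then show "A1 i \<inter> D \<noteq> {}" using h[rule_format, of i] unfolding A_def by auto
      qed
      moreover have "\<forall>i<n2. A2 i \<inter> D \<noteq> {}"
      proof (intro allI impI)
        fix i assume "i < n2" then show "A2 i \<inter> D \<noteq> {}" using h[rule_format, of "n1 + i"] unfolding A_def by auto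
      qed
      ultimately show "D \<in> D1 \<inter> D2" using 1 2 D by blast
    qed
    moreover have "D1 \<inter> D2 \<subseteq> coherent_sets" using 1(3) by blast
    ultimately show "D1 \<inter> D2 \<in> FK K" by (intro FK_I[of _ "n1+n2" A])
  qed
  show "\<forall>D1\<in>FK K. \<forall>D2. D1 \<subseteq> D2 \<and> D2 \<subseteq> coherent_sets \<longrightarrow> D2 \<in> FK K"
  proof (intro ballI allI impI)
    fix D1 D2 assume d1: "D1 \<in> FK K" and d2: "D1 \<subseteq> D2 \<and> D2 \<subseteq> coherent_sets"
    obtain n A where 1: "\<forall>i<(n::nat). A i \<in> K"
      "\<forall>D\<in>coherent_sets. (\<forall>i<n. A i \<inter> D \<noteq> {}) \<longrightarrow> D \<in> D1"
      using d1 by (rule FK_E) blast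
    have "\<forall>D\<in>coherent_sets. (\<forall>i<n. A i \<inter> D \<noteq> {}) \<longrightarrow> D \<in> D2" using 1(2) d2 by blast
    then show "D2 \<in> FK K" using d2 1(1) by (intro FK_I[of _ n A]) auto
  qed
qed

lemma FK_repr: fixes K :: "('a \<Rightarrow> real) set set" assumes KC: "coherent_K K" and Kg: "K \<subseteq> Pow gambles"
  shows "represents K (FK K)"
  unfolding represents_def
proof (intro allI impI iffI)
  fix B :: "('a \<Rightarrow> real) set" assume Bg: "B \<subseteq> gambles"
  {
    assume BK: "B \<in> K"
    have s1: "{D \<in> coherent_sets. B \<inter> D \<noteq> {}} \<subseteq> coherent_sets" by (rule subsetI) simp
    have s2: "\<forall>i<(1::nat). (\<lambda>_. B) i \<in> K" using BK by simp
    have s3: "\<forall>D\<in>coherent_sets. (\<forall>i<(1::nat). (\<lambda>_. B) i \<inter> D \<noteq> {}) \<longrightarrow> D \<in> {D \<in> coherent_sets. B \<inter> D \<noteq> {}}"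
      by simp
    have M: "{D \<in> coherent_sets. B \<inter> D \<noteq> {}} \<in> FK K" by (rule FK_I[OF s1 s2 s3])
    show "\<exists>DD\<in>FK K. \<forall>D\<in>DD. B \<inter> D \<noteq> {}"
    proof (rule bexI[OF _ M])
      show "\<forall>D\<in>{D \<in> coherent_sets. B \<inter> D \<noteq> {}}. B \<inter> D \<noteq> {}" by simp
    qed
  }
  {
    assume "\<exists>DD\<in>FK K. \<forall>D\<in>DD. B \<inter> D \<noteq> {}"
    then obtain DD where DD: "DD \<in> FK K" "\<forall>D\<in>DD. B \<inter> D \<noteq> {}" by (elim bexE) blast
    obtain n A where A: "\<forall>i<(n::nat). A i \<in> K"
      "\<forall>D\<in>coherent_sets. (\<forall>i<n. A i \<inter> D \<noteq> {}) \<longrightarrow> D \<in> DD"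
      using DD(1) by (rule FK_E) blast
    note A = A DD(2)
    have "\<forall>D\<in>coherent_sets. (\<forall>i<n. A i \<inter> D \<noteq> {}) \<longrightarrow> B \<inter> D \<noteq> {}"
      using A(2,3) by blast
    then show "B \<in> K" by (rule key[OF KC Kg A(1) Bg])
  }
qed

lemma pf_parts:
  assumes "proper_filter_on F C"
  shows pf_pow: "F \<subseteq> Pow C" and pf_ne: "F \<noteq> {}" and pf_empty: "{} \<notin> F"
    and pf_inter0: "\<forall>D1\<in>F. \<forall>D2\<in>F. D1 \<inter> D2 \<in> F"
    and pf_up0: "\<forall>D1\<in>F. \<forall>D2. D1 \<subseteq> D2 \<and> D2 \<subseteq> C \<longrightarrow> D2 \<in> F"
proof -
  note H = assms[unfolded proper_filter_on_def]
  show "F \<subseteq> Pow C" by (rule conjunct1[OF H])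
  show "F \<noteq> {}" by (rule conjunct1[OF conjunct2[OF H]])
  show "{} \<notin> F" by (rule conjunct1[OF conjunct2[OF conjunct2[OF H]]])
  show "\<forall>D1\<in>F. \<forall>D2\<in>F. D1 \<inter> D2 \<in> F" by (rule conjunct1[OF conjunct2[OF conjunct2[OF conjunct2[OF H]]]])
  show "\<forall>D1\<in>F. \<forall>D2. D1 \<subseteq> D2 \<and> D2 \<subseteq> C \<longrightarrow> D2 \<in> F" by (rule conjunct2[OF conjunct2[OF conjunct2[OF conjunct2[OF H]]]])
qed

lemma pf_sub: "proper_filter_on F C \<Longrightarrow> D \<in> F \<Longrightarrow> D \<subseteq> C"
  using pf_pow by blast
lemma pf_inter: assumes "proper_filter_on F C" "D1 \<in> F" "D2 \<in> F" shows "D1 \<inter> D2 \<in> F"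
proof -
  have "\<forall>D2\<in>F. D1 \<inter> D2 \<in> F" using pf_inter0[OF assms(1)] assms(2) by (rule bspec)
  then show ?thesis using assms(3) by (rule bspec)
qed
lemma pf_up: assumes "proper_filter_on F C" "D1 \<in> F" "D1 \<subseteq> D2" "D2 \<subseteq> C" shows "D2 \<in> F"
proof -
  have "\<forall>D2. D1 \<subseteq> D2 \<and> D2 \<subseteq> C \<longrightarrow> D2 \<in> F" using pf_up0[OF assms(1)] assms(2) by (rule bspec)
  then have "D1 \<subseteq> D2 \<and> D2 \<subseteq> C \<longrightarrow> D2 \<in> F" by (rule spec)
  then show ?thesis using assms(3,4) by blast
qed

lemma filter_fin_inter: assumes F: "proper_filter_on F C"
  shows "(\<forall>i<(n::nat). DD i \<in> F) \<Longrightarrow> C \<inter> (\<Inter>i<n. DD i) \<in> F"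
proof (induction n)
  case 0
  have "F \<noteq> {}" by (rule pf_ne[OF F])
  then obtain D1 where "D1 \<in> F" by blast
  moreover have "D1 \<subseteq> C" using pf_sub[OF F \<open>D1 \<in> F\<close>] .
  ultimately have "C \<in> F" using pf_up[OF F] by blast
  then show ?case by simp
next
  case (Suc n)
  then have a: "C \<inter> (\<Inter>i<n. DD i) \<in> F" and b: "DD n \<in> F" by auto
  have "C \<inter> (\<Inter>i<Suc n. DD i) = (C \<inter> (\<Inter>i<n. DD i)) \<inter> DD n"
    by (auto simp: lessThan_Suc)
  then show ?case using pf_inter[OF F a b] by simp
qed

lemma coherent_from_filter:
  fixes K :: "('a \<Rightarrow> real) set set"
  assumes Kg: "K \<subseteq> Pow gambles" and F: "proper_filter_on F coherent_sets" and R: "represents K F"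
  shows "coherent_K K"
proof -
  have FC: "\<And>DD. DD \<in> F \<Longrightarrow> DD \<subseteq> coherent_sets" using pf_sub[OF F] by blast
  have Fup: "\<And>D1 D2. D1 \<in> F \<Longrightarrow> D1 \<subseteq> D2 \<Longrightarrow> D2 \<subseteq> coherent_sets \<Longrightarrow> D2 \<in> F"
    using pf_up[OF F] by blast
  have Fne: "{} \<notin> F" by (rule pf_empty[OF F])
  have CF: "coherent_sets \<in> F" using filter_fin_inter[OF F, of 0] by simp
  have Rin: "\<And>B. B \<subseteq> gambles \<Longrightarrow> B \<in> K \<Longrightarrow> \<exists>DD\<in>F. \<forall>D\<in>DD. B \<inter> D \<noteq> {}"
    using R unfolding represents_def by blast
  have Rout: "\<And>B DD. B \<subseteq> gambles \<Longrightarrow> DD \<in> F \<Longrightarrow> \<forall>D\<in>DD. B \<inter> D \<noteq> {} \<Longrightarrow> B \<in> K"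
    using R unfolding represents_def by blast
  have cD: "\<And>D. D \<in> coherent_sets \<Longrightarrow> coherent_D D" unfolding coherent_sets_def by simp
  show ?thesis unfolding coherent_K_def
  proof (intro conjI)
    show "{} \<notin> K"
    proof
      assume "{} \<in> K"
      then obtain DD where "DD \<in> F" "\<forall>D\<in>DD. {} \<inter> D \<noteq> {}" using Rin by blast
      then have "DD = {}" by auto
      then show False using Fne \<open>DD \<in> F\<close> by simp
    qed
    show "\<forall>A\<in>K. A - {\<lambda>x. 0} \<in> K"
    proof
      fix A assume A: "A \<in> K"
      then have Ag: "A \<subseteq> gambles" using Kg by auto
      obtain DD where DD: "DD \<in> F" "\<forall>D\<in>DD. A \<inter> D \<noteq> {}" using Rin[OF Ag A] by blast
      have "\<forall>D\<in>DD. (A - {\<lambda>x. 0}) \<inter> D \<noteq> {}"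
      proof
        fix D assume "D \<in> DD"
        then have Dc: "D \<in> coherent_sets" using FC[OF DD(1)] by blast
        have "(\<lambda>x. 0) \<notin> D" using cD_0[OF cD[OF Dc]] .
        moreover have "A \<inter> D \<noteq> {}" using DD(2) \<open>D \<in> DD\<close> by blast
        ultimately have "(\<lambda>x. 0) \<notin> D" "A \<inter> D \<noteq> {}" by auto
        then show "(A - {\<lambda>x. 0}) \<inter> D \<noteq> {}" by blast
      qed
      moreover have "A - {\<lambda>x. 0} \<subseteq> gambles" using Ag by blast
      ultimately show "A - {\<lambda>x. 0} \<in> K" using Rout[OF _ DD(1)] by blast
    qed
    show "\<forall>g\<in>pos_gambles. {g} \<in> K"
    proof
      fix g :: "'a \<Rightarrow> real" assume g: "g \<in> pos_gambles"
      have "\<forall>D\<in>coherent_sets. {g} \<inter> D \<noteq> {}"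
      proof
        fix D :: "('a \<Rightarrow> real) set" assume "D \<in> coherent_sets"
        then have "g \<in> D" using cD_pos[OF cD] g by blast
        then show "{g} \<inter> D \<noteq> {}" by blast
      qed
      moreover have "{g} \<subseteq> gambles" using g unfolding pos_gambles_def by auto
      ultimately show "{g} \<in> K" using Rout[OF _ CF] by blast
    qed
    show "\<forall>A\<in>K. \<forall>B. A \<subseteq> B \<and> B \<subseteq> gambles \<longrightarrow> B \<in> K"
    proof (intro ballI allI impI)
      fix A B assume A: "A \<in> K" and B: "A \<subseteq> B \<and> B \<subseteq> gambles"
      obtain DD where DD: "DD \<in> F" "\<forall>D\<in>DD. A \<inter> D \<noteq> {}" using Rin A Kg by blast
      then have "\<forall>D\<in>DD. B \<inter> D \<noteq> {}" using B by blast
      moreover have "B \<subseteq> gambles" using B by blast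
      ultimately show "B \<in> K" using Rout[OF _ DD(1)] by blast
    qed
    show "\<forall>A\<in>K. \<forall>f. (\<forall>g\<in>A. f g \<in> gambles \<and> (\<forall>x. g x \<le> f g x)) \<longrightarrow> f ` A \<in> K"
    proof (intro ballI allI impI)
      fix A f assume A: "A \<in> K" and f: "\<forall>g\<in>A. f g \<in> gambles \<and> (\<forall>x. g x \<le> f g x)"
      obtain DD where DD: "DD \<in> F" "\<forall>D\<in>DD. A \<inter> D \<noteq> {}" using Rin A Kg by blast
      have "\<forall>D\<in>DD. f ` A \<inter> D \<noteq> {}"
      proof
        fix D assume D: "D \<in> DD"
        then obtain g where g: "g \<in> A" "g \<in> D" using DD by blast
        have Dc: "coherent_D D" using cD FC[OF DD(1)] D by blast
        have fg1: "f g \<in> gambles" "\<forall>x. g x \<le> f g x" using f g(1) by auto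
        have "f g \<in> D" by (rule coherent_up[OF Dc g(2) fg1])
        then show "f ` A \<inter> D \<noteq> {}" using g(1) by blast
      qed
      moreover have "f ` A \<subseteq> gambles" using f by blast
      ultimately show "f ` A \<in> K" using Rout[OF _ DD(1)] by blast
    qed
    show "\<forall>(n::nat) (A::nat \<Rightarrow> ('a \<Rightarrow> real) set) f.
        (\<forall>i<n. A i \<in> K) \<and> (\<forall>g\<in>PiE {..<n} A. f g \<in> posi (g ` {..<n}))
        \<longrightarrow> f ` (PiE {..<n} A) \<in> K"
    proof (intro allI impI)
      fix n :: nat and A :: "nat \<Rightarrow> ('a \<Rightarrow> real) set" and f
      assume h: "(\<forall>i<n. A i \<in> K) \<and> (\<forall>g\<in>PiE {..<n} A. f g \<in> posi (g ` {..<n}))"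
      have "\<forall>i<n. \<exists>DD\<in>F. \<forall>D\<in>DD. A i \<inter> D \<noteq> {}"
      proof (intro allI impI)
        fix i assume i: "i < n"
        then have Ai: "A i \<in> K" using h by blast
        then have "A i \<subseteq> gambles" using Kg by blast
        then show "\<exists>DD\<in>F. \<forall>D\<in>DD. A i \<inter> D \<noteq> {}" using Rin Ai by blast
      qed
      then obtain DDs where DDs: "\<forall>i<n. DDs i \<in> F \<and> (\<forall>D\<in>DDs i. A i \<inter> D \<noteq> {})" by metis
      define E where "E = coherent_sets \<inter> (\<Inter>i<n. DDs i)"
      have E: "E \<in> F" unfolding E_def using filter_fin_inter[OF F, of n DDs] DDs by simp
      have fg: "f ` (PiE {..<n} A) \<subseteq> gambles"
      proof
        fix c assume "c \<in> f ` (PiE {..<n} A)"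
        then obtain g where g: "g \<in> PiE {..<n} A" "c = f g" by blast
        have "g ` {..<n} \<subseteq> gambles" using g(1) h Kg by (auto simp: PiE_def Pi_def)
        moreover have "f g \<in> posi (g ` {..<n})" using h g(1) by blast
        ultimately show "c \<in> gambles" using posi_gambles g(2) by blast
      qed
      have "\<forall>D\<in>E. f ` (PiE {..<n} A) \<inter> D \<noteq> {}"
      proof
        fix D assume D: "D \<in> E"
        then have "D \<in> coherent_sets" unfolding E_def by simp
        then have Dc: "coherent_D D" by (rule cD)
        have "\<forall>i<n. \<exists>x. x \<in> A i \<inter> D"
        proof (intro allI impI)
          fix i assume i: "i < n"
          have "D \<in> DDs i" using D i unfolding E_def by simp
          then have "A i \<inter> D \<noteq> {}" using DDs i by blast
          then show "\<exists>x. x \<in> A i \<inter> D" by blast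
        qed
        then obtain sel where sel: "\<forall>i<n. sel i \<in> A i \<inter> D" by metis
        define g where "g = restrict sel {..<n}"
        have g: "g \<in> PiE {..<n} A" unfolding g_def using sel by auto
        have "g ` {..<n} \<subseteq> D" unfolding g_def using sel by auto
        moreover have "f g \<in> posi (g ` {..<n})" using h g by blast
        ultimately have "f g \<in> D" using posi_sub_D[OF Dc] by blast
        then show "f ` (PiE {..<n} A) \<inter> D \<noteq> {}" using g by blast
      qed
      then show "f ` (PiE {..<n} A) \<in> K" using Rout[OF fg E] by blast
    qed
  qed
qed

theorem mainTheorem11:
  fixes K :: "('a \<Rightarrow> real) set set"
  assumes "K \<subseteq> Pow gambles"
  shows "(coherent_K K \<longleftrightarrow>
           (\<exists>F. proper_filter_on F coherent_sets \<and> represents K F))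
       \<and> (\<forall>F. proper_filter_on F coherent_sets \<and> represents K F \<longrightarrow>
           (\<forall>B. B \<subseteq> gambles \<longrightarrow>
              ((\<exists>DD\<in>F. \<forall>D\<in>DD. B \<inter> D \<noteq> {}) \<longleftrightarrow>
               {D \<in> coherent_sets. B \<inter> D \<noteq> {}} \<in> F)))"
proof (intro conjI iffI allI impI)
  assume KC: "coherent_K K"
  have "proper_filter_on (FK K) coherent_sets" by (rule FK_filter[OF KC assms])
  moreover have "represents K (FK K)" by (rule FK_repr[OF KC assms])
  ultimately show "\<exists>F. proper_filter_on F coherent_sets \<and> represents K F" by (intro exI conjI)
next
  assume "\<exists>F. proper_filter_on F coherent_sets \<and> represents K F"
  then obtain F where "proper_filter_on F coherent_sets" "represents K F" by blast
  then show "coherent_K K" by (intro coherent_from_filter[OF assms])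
next
  fix F and B :: "('a \<Rightarrow> real) set" assume FR: "proper_filter_on F coherent_sets \<and> represents K F" and Bg: "B \<subseteq> gambles"
  from FR have F: "proper_filter_on F coherent_sets" by (rule conjunct1)
  {
    assume "\<exists>DD\<in>F. \<forall>D\<in>DD. B \<inter> D \<noteq> {}"
    then obtain DD where DD: "DD \<in> F" "\<forall>D\<in>DD. B \<inter> D \<noteq> {}" by blast
    have "DD \<subseteq> coherent_sets" using pf_sub[OF F DD(1)] .
    then have "DD \<subseteq> {D \<in> coherent_sets. B \<inter> D \<noteq> {}}" using DD(2) by blast
    then show "{D \<in> coherent_sets. B \<inter> D \<noteq> {}} \<in> F"
      by (rule pf_up[OF F DD(1)]) (rule subsetI, simp)
  }
  {
    assume M: "{D \<in> coherent_sets. B \<inter> D \<noteq> {}} \<in> F"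
    show "\<exists>DD\<in>F. \<forall>D\<in>DD. B \<inter> D \<noteq> {}"
    proof (rule bexI[OF _ M])
      show "\<forall>D\<in>{D \<in> coherent_sets. B \<inter> D \<noteq> {}}. B \<inter> D \<noteq> {}" by simp
    qed
  }
qed


end
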